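(* Let $L$ be a $c$-lattice and $S$ a multiplicatively closed subset of $L$ (with $1\in S$, $0\notin S$). If $p\in L$ is an $S$-prime element, then its $S$-saturation $p_S$ is a prime element of $L$.
   Context: A multiplicative lattice is a complete lattice with a commutative, associative multiplication distributing over arbitrary joins, with $1$ as identity; $L_*$ is the set of compact elements. A $c$-lattice is a compactly generated multiplicative lattice with $1$ compact in which the product of two compact elements is compact. A multiplicatively closed subset is a nonempty $S\subseteq L_*$ closed under multiplication. The $S$-saturation of $a$ is $a_S=\bigvee\{x\in L\mid sx\le a\text{ for some }s\in S\}$. An element $p\ne1$ is prime if $ab\le p$ implies $a\le p$ or $b\le p$. A proper element $p$ with $t\not\le p$ for all $t\in S$ is $S$-prime if there exists $s\in S$ such that for all $a,b\in L$, $ab\le p$ implies $sa\le p$ or $sb\le p$. *)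

theory Defs
  imports Main
begin

definition mult_lattice :: "('a::complete_lattice \<Rightarrow> 'a \<Rightarrow> 'a) \<Rightarrow> bool" where
  "mult_lattice m \<longleftrightarrow>
     (\<forall>a b c. m (m a b) c = m a (m b c)) \<and>
     (\<forall>a b. m a b = m b a) \<and>
     (\<forall>a. m a top = a) \<and>
     (\<forall>a B. m a (Sup B) = Sup (m a ` B))"

definition compact_el :: "'a::complete_lattice \<Rightarrow> bool" where
  "compact_el x \<longleftrightarrow> (\<forall>B. x \<le> Sup B \<longrightarrow> (\<exists>F. F \<subseteq> B \<and> finite F \<and> x \<le> Sup F))"

definition compactly_generated :: "'a::complete_lattice itself \<Rightarrow> bool" where
  "compactly_generated _ \<longleftrightarrow> (\<forall>x::'a. x = Sup {c. compact_el c \<and> c \<le> x})"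

definition c_lattice :: "('a::complete_lattice \<Rightarrow> 'a \<Rightarrow> 'a) \<Rightarrow> bool" where
  "c_lattice m \<longleftrightarrow> mult_lattice m \<and> compactly_generated TYPE('a) \<and> compact_el (top::'a) \<and>
     (\<forall>a b. compact_el a \<and> compact_el b \<longrightarrow> compact_el (m a b))"

definition mult_closed :: "('a::complete_lattice \<Rightarrow> 'a \<Rightarrow> 'a) \<Rightarrow> 'a set \<Rightarrow> bool" where
  "mult_closed m S \<longleftrightarrow> S \<noteq> {} \<and> (\<forall>s\<in>S. compact_el s) \<and> (\<forall>s\<in>S. \<forall>t\<in>S. m s t \<in> S)"

definition saturation :: "('a::complete_lattice \<Rightarrow> 'a \<Rightarrow> 'a) \<Rightarrow> 'a set \<Rightarrow> 'a \<Rightarrow> 'a" where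
  "saturation m S a = Sup {x. \<exists>s\<in>S. m s x \<le> a}"

definition prime_el :: "('a::complete_lattice \<Rightarrow> 'a \<Rightarrow> 'a) \<Rightarrow> 'a \<Rightarrow> bool" where
  "prime_el m p \<longleftrightarrow> p \<noteq> top \<and> (\<forall>a b. m a b \<le> p \<longrightarrow> a \<le> p \<or> b \<le> p)"

definition S_prime :: "('a::complete_lattice \<Rightarrow> 'a \<Rightarrow> 'a) \<Rightarrow> 'a set \<Rightarrow> 'a \<Rightarrow> bool" where
  "S_prime m S p \<longleftrightarrow> p \<noteq> top \<and> (\<forall>t\<in>S. \<not> t \<le> p) \<and>
     (\<exists>s\<in>S. \<forall>a b. m a b \<le> p \<longrightarrow> m s a \<le> p \<or> m s b \<le> p)"

end

theory Submission
  imports Defs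
begin

lemma ml_sup2:
  assumes "mult_lattice m" shows "m a (sup x y) = sup (m a x) (m a y)"
proof -
  have "m a (Sup {x, y}) = Sup (m a ` {x,y})" using assms unfolding mult_lattice_def by blast
  then show ?thesis by simp
qed

lemma ml_bot:
  assumes "mult_lattice m" shows "m a bot = bot"
proof -
  have "m a (Sup {}) = Sup (m a ` {})" using assms unfolding mult_lattice_def by blast
  then show ?thesis by simp
qed

lemma ml_mono:
  assumes "mult_lattice m" "x \<le> y" shows "m a x \<le> m a y"
proof -
  have "m a y = m a (sup x y)" using assms(2) by (simp add: sup_absorb2)
  also have "\<dots> = sup (m a x) (m a y)" using ml_sup2[OF assms(1)] by simp
  finally show ?thesis by (metis sup.cobounded1)
qed

lemma ml_mono1:
  assumes "mult_lattice m" "x \<le> y" shows "m x a \<le> m y a"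
proof -
  have c: "\<And>u v. m u v = m v u" using assms(1) unfolding mult_lattice_def by blast
  show ?thesis using ml_mono[OF assms, of a] c by simp
qed

lemma ml_le:
  assumes "mult_lattice m" shows "m s x \<le> x"
proof -
  have c: "\<And>u v. m u v = m v u" and t: "\<And>u. m u top = u"
    using assms(1) unfolding mult_lattice_def by blast+
  have "m s x \<le> m top x" using ml_mono1[OF assms, of s top x] by simp
  then show ?thesis using c t by metis
qed

theorem mainTheorem12:
  fixes m :: "'a::complete_lattice \<Rightarrow> 'a \<Rightarrow> 'a" and S :: "'a set" and p :: 'a
  assumes "c_lattice m"
    and "mult_closed m S"
    and "top \<in> S" and "bot \<notin> S"
    and "S_prime m S p"
  shows "prime_el m (saturation m S p)"
proof -
  have ml: "mult_lattice m" using assms(1) unfolding c_lattice_def by blast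
  have assoc: "\<And>a b c. m (m a b) c = m a (m b c)" and comm: "\<And>a b. m a b = m b a"
    and tp: "\<And>a. m a top = a"
    using ml unfolding mult_lattice_def by blast+
  have cg: "\<And>x::'a. x = Sup {c. compact_el c \<and> c \<le> x}" and ct: "compact_el (top::'a)"
    and cm: "\<And>a b. compact_el a \<Longrightarrow> compact_el b \<Longrightarrow> compact_el (m a b)"
    using assms(1) unfolding c_lattice_def compactly_generated_def by blast+
  have Sm: "\<And>s t. s \<in> S \<Longrightarrow> t \<in> S \<Longrightarrow> m s t \<in> S" using assms(2) unfolding mult_closed_def by blast
  obtain s0 where s0: "s0 \<in> S" "\<And>a b. m a b \<le> p \<Longrightarrow> m s0 a \<le> p \<or> m s0 b \<le> p"
    using assms(5) unfolding S_prime_def by blast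
  have nS: "\<And>t. t \<in> S \<Longrightarrow> \<not> t \<le> p" using assms(5) unfolding S_prime_def by blast
  define X where "X = {x. \<exists>s\<in>S. m s x \<le> p}"
  have P: "saturation m S p = Sup X" unfolding saturation_def X_def by simp
  have Xbot: "bot \<in> X" unfolding X_def using assms(3) ml_bot[OF ml] by auto
  have Xsup: "sup x y \<in> X" if xy: "x \<in> X" "y \<in> X" for x y
  proof -
    obtain s t where st: "s \<in> S" "t \<in> S" "m s x \<le> p" "m t y \<le> p" using xy unfolding X_def by blast
    have "m (m s t) x = m t (m s x)" using assoc comm by metis
    also have "\<dots> \<le> m s x" by (rule ml_le[OF ml])
    finally have 1: "m (m s t) x \<le> p" using st by simp
    have "m (m s t) y = m s (m t y)" using assoc comm by metis
    also have "\<dots> \<le> m t y" by (rule ml_le[OF ml])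
    finally have 2: "m (m s t) y \<le> p" using st by simp
    have "m (m s t) (sup x y) \<le> p" using 1 2 ml_sup2[OF ml] by simp
    then show ?thesis unfolding X_def using Sm st by blast
  qed
  have Xfin: "finite F \<Longrightarrow> F \<subseteq> X \<Longrightarrow> Sup F \<in> X" for F
    by (induction F rule: finite_induct) (auto simp: Xbot Xsup)
  have Xdown: "x \<in> X" if h: "x \<le> y" "y \<in> X" for x y
  proof -
    obtain s where "s \<in> S" "m s y \<le> p" using h(2) unfolding X_def by blast
    moreover have "m s x \<le> m s y" using ml_mono[OF ml h(1)] .
    ultimately have "m s x \<le> p" by (rule_tac order_trans) auto
    then show ?thesis unfolding X_def using \<open>s \<in> S\<close> by blast
  qed
  have K: "c \<in> X" if h: "compact_el c" "c \<le> Sup X" for c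
  proof -
    obtain F where "F \<subseteq> X" "finite F" "c \<le> Sup F" using h unfolding compact_el_def by blast
    then show ?thesis using Xfin Xdown by blast
  qed
  have ntop: "saturation m S p \<noteq> top"
  proof
    assume "saturation m S p = top"
    then have "top \<in> X" using K ct P by simp
    then obtain s where "s \<in> S" "m s top \<le> p" unfolding X_def by blast
    then show False using nS tp by simp
  qed
  have pr: "a \<le> Sup X \<or> b \<le> Sup X" if ab: "m a b \<le> Sup X" for a b
  proof (rule ccontr)
    assume "\<not> (a \<le> Sup X \<or> b \<le> Sup X)"
    then have na: "\<not> a \<le> Sup X" and nb: "\<not> b \<le> Sup X" by auto
    obtain x where x: "compact_el x" "x \<le> a" "\<not> x \<le> Sup X"
    proof -
      have "\<not> Sup {c. compact_el c \<and> c \<le> a} \<le> Sup X" using na cg[of a] by simp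
      then show ?thesis using that by (smt (verit) Sup_least mem_Collect_eq)
    qed
    obtain y where y: "compact_el y" "y \<le> b" "\<not> y \<le> Sup X"
    proof -
      have "\<not> Sup {c. compact_el c \<and> c \<le> b} \<le> Sup X" using nb cg[of b] by simp
      then show ?thesis using that by (smt (verit) Sup_least mem_Collect_eq)
    qed
    have "m x y \<le> m a y" using ml_mono1[OF ml x(2)] .
    also have "\<dots> \<le> m a b" using ml_mono[OF ml y(2)] .
    finally have "m x y \<le> Sup X" using ab by simp
    then have "m x y \<in> X" using K cm x y by blast
    then obtain u where u: "u \<in> S" "m u (m x y) \<le> p" unfolding X_def by blast
    then have "m (m u x) y \<le> p" using assoc by metis
    then have "m s0 (m u x) \<le> p \<or> m s0 y \<le> p" using s0 by blast
    then show False
    proof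
      assume "m s0 (m u x) \<le> p"
      then have "m (m s0 u) x \<le> p" using assoc by metis
      then have "x \<in> X" unfolding X_def using Sm s0(1) u(1) by blast
      then show False using x(3) Sup_upper by blast
    next
      assume "m s0 y \<le> p"
      then have "y \<in> X" unfolding X_def using s0(1) by blast
      then show False using y(3) Sup_upper by blast
    qed
  qed
  show ?thesis unfolding prime_el_def using ntop pr P by simp
qed

end
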